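(* Let $\varepsilon>0$ be sufficiently small, $0<\theta<\pi/2$, $\tilde\eta>0$, and let $\Delta_\varepsilon=\{x\in\mathbb C:|x-\rho|<\varepsilon,\ |\arg(x-\rho)|>\theta\}$ and $\Xi_k=\{u\in\mathbb C:|u|\le1,\ k|u-1|\le\tilde\eta\}$. Then there is $0<L<1$ such that, for $u\in\Xi_k$ and $x\in\Delta_\varepsilon$, $$\sum_{i\ge2}\gamma_k(x^i,u^i)=O(L^k).$$
   Context: Let $y(x)=\sum_{n\ge1}y_nx^n$, $y_n$ the number of unlabelled rooted trees with $n$ vertices; it satisfies $y(x)=x\exp(\sum_{i\ge1}y(x^i)/i)$, has radius of convergence $\rho\in(0,1)$, $y(\rho)=1$. Define $y_0(x,u)=uy(x)$, $y_{k+1}(x,u)=x\exp\left(\sum_{i\ge1}y_k(x^i,u^i)/i\right)$, and $\gamma_k(x,u)=\frac{\partial}{\partial u}y_k(x,u)$. *)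

theory Defs
  imports "HOL-Analysis.Analysis" "HOL-Library.Multiset"
begin

text \<open>Unlabelled rooted trees: a root together with a multiset of subtrees.
  Two trees are equal iff they are isomorphic as rooted trees.\<close>
datatype rtree = Node "rtree multiset"

primrec nverts :: "rtree \<Rightarrow> nat" where
  "nverts (Node ts) = Suc (sum_mset (image_mset nverts ts))"

definition ycount :: "nat \<Rightarrow> nat" where
  "ycount n = card {t. nverts t = n}"

definition ygf :: "complex \<Rightarrow> complex" where
  "ygf x = (\<Sum>n. of_nat (ycount n) * x ^ n)"

definition rho :: real where
  "rho = real_of_ereal (conv_radius (\<lambda>n. (of_nat (ycount n) :: complex)))"

primrec Yk :: "nat \<Rightarrow> complex \<Rightarrow> complex \<Rightarrow> complex" where
  "Yk 0 x u = u * ygf x"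
| "Yk (Suc k) x u = x * exp (\<Sum>i. Yk k (x ^ Suc i) (u ^ Suc i) / of_nat (Suc i))"

definition gammak :: "nat \<Rightarrow> complex \<Rightarrow> complex \<Rightarrow> complex" where
  "gammak k x u = deriv (\<lambda>v. Yk k x v) u"

definition Delta :: "real \<Rightarrow> real \<Rightarrow> complex set" where
  "Delta \<epsilon> \<theta> = {x. cmod (x - complex_of_real rho) < \<epsilon> \<and> \<bar>Arg (x - complex_of_real rho)\<bar> > \<theta>}"

definition Xi :: "real \<Rightarrow> nat \<Rightarrow> complex set" where
  "Xi \<eta> k = {u. cmod u \<le> 1 \<and> real k * cmod (u - 1) \<le> \<eta>}"

end

theory Submission
  imports Defs
begin


lemma nverts_ge1: "nverts t \<ge> 1"
  by (cases t) auto

definition TS :: "nat \<Rightarrow> rtree set" where "TS N = {t. nverts t \<le> N}"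

lemma finite_TS: "finite (TS N)"
proof (induction N)
  case 0
  have "nverts t \<noteq> 0" for t by (cases t) auto
  then have "TS 0 = {}" by (auto simp: TS_def)
  then show ?case by simp
next
  case (Suc N)
  have "TS (Suc N) \<subseteq> Node ` (mset ` {xs. set xs \<subseteq> TS N \<and> length xs \<le> N})"
  proof
    fix t assume t: "t \<in> TS (Suc N)"
    obtain M where tM: "t = Node M" by (cases t)
    obtain xs where xs: "mset xs = M" using ex_mset by blast
    have s: "sum_list (map nverts xs) \<le> N" using t tM xs
      by (simp add: TS_def flip: sum_mset_sum_list)
    have "set xs \<subseteq> TS N"
    proof
      fix s assume "s \<in> set xs"
      then have "nverts s \<le> sum_list (map nverts xs)"
        by (simp add: member_le_sum_list)
      then show "s \<in> TS N" using s by (simp add: TS_def)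
    qed
    moreover have "length xs \<le> sum_list (map nverts xs)"
    proof -
      have "length xs = sum_list (map (\<lambda>_. 1::nat) xs)" by (simp add: sum_list_triv)
      also have "\<dots> \<le> sum_list (map nverts xs)"
        by (rule sum_list_mono) (use nverts_ge1 in auto)
      finally show ?thesis .
    qed
    ultimately show "t \<in> Node ` (mset ` {xs. set xs \<subseteq> TS N \<and> length xs \<le> N})"
      using tM xs s by auto
  qed
  moreover have "finite (Node ` (mset ` {xs. set xs \<subseteq> TS N \<and> length xs \<le> N}))"
    using finite_lists_length_le[OF Suc.IH] by blast
  ultimately show ?case using finite_subset by blast
qed


definition W :: "real \<Rightarrow> nat \<Rightarrow> real" where "W x N = (\<Sum>t\<in>TS N. x ^ nverts t)"

lemma finite_level: "finite {t. nverts t = n}"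
  by (rule finite_subset[OF _ finite_TS[of n]]) (auto simp: TS_def)

lemma W_eq: "W x N = (\<Sum>n\<le>N. real (ycount n) * x ^ n)"
proof -
  have "W x N = (\<Sum>n\<le>N. \<Sum>t\<in>{t\<in>TS N. nverts t = n}. x ^ nverts t)"
    unfolding W_def by (rule sum.group[symmetric]) (auto simp: finite_TS[unfolded TS_def] TS_def)
  also have "\<dots> = (\<Sum>n\<le>N. real (ycount n) * x ^ n)"
  proof (rule sum.cong)
    fix n assume "n \<in> {..N}"
    then have "{t\<in>TS N. nverts t = n} = {t. nverts t = n}" by (auto simp: TS_def)
    then show "(\<Sum>t\<in>{t\<in>TS N. nverts t = n}. x ^ nverts t) = real (ycount n) * x ^ n"
      by (simp add: ycount_def)
  qed simp
  finally show ?thesis .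
qed

lemma W_nonneg: "x \<ge> 0 \<Longrightarrow> W x N \<ge> 0"
  unfolding W_def by (intro sum_nonneg) auto

lemma sum_lists_prod:
  assumes "finite A"
  shows "(\<Sum>xs\<in>{xs. set xs \<subseteq> A \<and> length xs = k}. prod_list (map (f::_\<Rightarrow>real) xs)) = (sum f A) ^ k"
proof (induction k)
  case 0
  have "{xs. set xs \<subseteq> A \<and> length xs = 0} = {[]}" by auto
  then show ?case by simp
next
  case (Suc k)
  have inj: "inj_on (\<lambda>(xs, n). n#xs) ({xs. set xs \<subseteq> A \<and> length xs = k} \<times> A)"
    by (auto simp: inj_on_def)
  have "(\<Sum>xs\<in>{xs. set xs \<subseteq> A \<and> length xs = Suc k}. prod_list (map f xs))
      = (\<Sum>p\<in>{xs. set xs \<subseteq> A \<and> length xs = k} \<times> A. prod_list (map f ((\<lambda>(xs, n). n#xs) p)))"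
    unfolding lists_length_Suc_eq by (subst sum.reindex[OF inj]) (simp add: comp_def)
  also have "\<dots> = (\<Sum>xs\<in>{xs. set xs \<subseteq> A \<and> length xs = k}. \<Sum>a\<in>A. f a * prod_list (map f xs))"
    by (subst sum.cartesian_product) (rule sum.cong, auto)
  also have "\<dots> = (\<Sum>xs\<in>{xs. set xs \<subseteq> A \<and> length xs = k}. sum f A * prod_list (map f xs))"
    by (rule sum.cong[OF refl], rule sum_distrib_right[symmetric])
  also have "\<dots> = sum f A * (sum f A) ^ k"
    by (simp add: sum_distrib_left[symmetric] Suc.IH)
  finally show ?case by simp
qed

lemma pow_sum_list: "(x::real) ^ sum_list (map g xs) = prod_list (map (\<lambda>s. x ^ g s) xs)"
  by (induction xs) (auto simp: power_add)

lemma W_upper: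
  assumes x: "x \<ge> 0"
  shows "W x (Suc N) \<le> x * (\<Sum>k\<le>N. (W x N) ^ k)"
proof -
  define L where "L t = (SOME xs. mset xs = (case t of Node M \<Rightarrow> M))" for t
  have L: "mset (L t) = (case t of Node M \<Rightarrow> M)" for t
    unfolding L_def by (rule someI_ex) (rule ex_mset)
  have Lnode: "Node (mset (L t)) = t" for t
    using L[of t] by (cases t) auto
  have inj: "inj_on L (TS (Suc N))"
    by (rule inj_on_inverseI[where g = "\<lambda>xs. Node (mset xs)"]) (simp add: Lnode)
  let ?S = "{xs. set xs \<subseteq> TS N \<and> length xs \<le> N}"
  have nv: "nverts t = Suc (sum_list (map nverts (L t)))" for t
    using Lnode[of t] by (metis nverts.simps sum_mset_sum_list mset_map)
  have nv': "x ^ nverts t = x * prod_list (map (\<lambda>s. x ^ nverts s) (L t))" for t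
    by (subst nv) (simp add: pow_sum_list)
  have sub: "L ` TS (Suc N) \<subseteq> ?S"
  proof
    fix ys assume "ys \<in> L ` TS (Suc N)"
    then obtain t where t: "t \<in> TS (Suc N)" and ys: "ys = L t" by auto
    have s: "sum_list (map nverts ys) \<le> N" using t nv[of t] ys by (simp add: TS_def)
    have "set ys \<subseteq> TS N"
    proof
      fix s assume "s \<in> set ys"
      then have "nverts s \<le> sum_list (map nverts ys)"
        by (simp add: member_le_sum_list)
      then show "s \<in> TS N" using s by (simp add: TS_def)
    qed
    moreover have "length ys \<le> sum_list (map nverts ys)"
    proof -
      have "length ys = sum_list (map (\<lambda>_. 1::nat) ys)" by (simp add: sum_list_triv)
      also have "\<dots> \<le> sum_list (map nverts ys)"
        by (rule sum_list_mono) (use nverts_ge1 in auto)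
      finally show ?thesis .
    qed
    ultimately show "ys \<in> ?S" using s by auto
  qed
  have "W x (Suc N) = (\<Sum>t\<in>TS (Suc N). x * prod_list (map (\<lambda>s. x ^ nverts s) (L t)))"
    unfolding W_def by (rule sum.cong[OF refl], rule nv')
  also have "\<dots> = (\<Sum>ys\<in>L ` TS (Suc N). x * prod_list (map (\<lambda>s. x ^ nverts s) ys))"
    by (simp add: sum.reindex[OF inj])
  also have "\<dots> \<le> (\<Sum>ys\<in>?S. x * prod_list (map (\<lambda>s. x ^ nverts s) ys))"
    by (rule sum_mono2[OF finite_lists_length_le[OF finite_TS] sub])
       (auto intro!: mult_nonneg_nonneg prod_list_nonneg x zero_le_power)
  also have "?S = (\<Union>k\<in>{..N}. {xs. set xs \<subseteq> TS N \<and> length xs = k})" by auto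
  also have "(\<Sum>ys\<in>\<dots>. x * prod_list (map (\<lambda>s. x ^ nverts s) ys))
      = (\<Sum>k\<le>N. \<Sum>ys\<in>{xs. set xs \<subseteq> TS N \<and> length xs = k}. x * prod_list (map (\<lambda>s. x ^ nverts s) ys))"
    by (rule sum.UNION_disjoint) (auto intro: finite_lists_length_eq finite_TS)
  also have "\<dots> = x * (\<Sum>k\<le>N. (W x N) ^ k)"
    by (simp add: sum_distrib_left[symmetric] sum_lists_prod[OF finite_TS] W_def)
  finally show ?thesis .
qed


lemma TS0: "TS 0 = {}"
proof -
  have "nverts t \<noteq> 0" for t by (cases t) auto
  then show ?thesis by (auto simp: TS_def)
qed

lemma geom_le: "0 \<le> (q::real) \<Longrightarrow> q < 1 \<Longrightarrow> (\<Sum>k\<le>N. q ^ k) \<le> 1 / (1 - q)"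
proof -
  assume q: "0 \<le> q" "q < 1"
  have "(\<Sum>k\<le>N. q ^ k) = (\<Sum>k<Suc N. q ^ k)" by (simp add: lessThan_Suc_atMost)
  also have "\<dots> = (1 - q ^ Suc N) / (1 - q)" using q by (subst sum_gp_strict) simp
  also have "\<dots> \<le> 1 / (1 - q)" using q by (intro divide_right_mono) auto
  finally show ?thesis .
qed

lemma W_le:
  assumes x: "0 \<le> x" "x \<le> 9/50"
  shows "W x N \<le> 3/2 * x"
proof (induction N)
  case 0
  show ?case using x by (simp add: W_def TS0)
next
  case (Suc N)
  have "W x (Suc N) \<le> x * (\<Sum>k\<le>N. (W x N) ^ k)" by (rule W_upper[OF x(1)])
  also have "\<dots> \<le> x * (\<Sum>k\<le>N. (3/2 * x) ^ k)"
    using Suc.IH W_nonneg[OF x(1)] x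
    by (intro mult_left_mono sum_mono power_mono) auto
  also have "\<dots> \<le> x * (1 / (1 - 3/2 * x))"
    using x by (intro mult_left_mono geom_le) auto
  also have "\<dots> \<le> 3/2 * x"
  proof -
    have "1 / (1 - 3/2 * x) \<le> 3/2" using x by (simp add: field_simps)
    from mult_left_mono[OF this x(1)] show ?thesis by linarith
  qed
  finally show ?case .
qed

lemma ygf_abs:
  assumes z: "cmod z \<le> 9/50"
  shows "summable (\<lambda>n. norm (of_nat (ycount n) * z ^ n))"
    and "(\<Sum>n. norm (of_nat (ycount n) * z ^ n)) \<le> 3/2 * cmod z"
proof -
  have eq: "norm (of_nat (ycount n) * z ^ n) = real (ycount n) * cmod z ^ n" for n
    by (simp add: norm_mult norm_power)
  have ps: "(\<Sum>k\<le>n. norm (of_nat (ycount k) * z ^ k)) \<le> 3/2 * cmod z" for n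
    using W_le[of "cmod z" n] z by (simp add: eq W_eq)
  show s: "summable (\<lambda>n. norm (of_nat (ycount n) * z ^ n))"
    by (rule bounded_imp_summable[OF _ ps]) simp
  show "(\<Sum>n. norm (of_nat (ycount n) * z ^ n)) \<le> 3/2 * cmod z"
  proof (rule suminf_le_const[OF s])
    fix n show "(\<Sum>k<n. norm (of_nat (ycount k) * z ^ k)) \<le> 3/2 * cmod z"
    proof (cases n)
      case 0 then show ?thesis by simp
    next
      case (Suc m) then show ?thesis using ps[of m] by (simp add: lessThan_Suc_atMost)
    qed
  qed
qed

lemma ygf_bound:
  assumes z: "cmod z \<le> 9/50"
  shows "cmod (ygf z) \<le> 3/2 * cmod z"
proof -
  have "cmod (ygf z) \<le> (\<Sum>n. norm (of_nat (ycount n) * z ^ n))"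
    unfolding ygf_def by (rule summable_norm[OF ygf_abs(1)[OF z]])
  also have "\<dots> \<le> 3/2 * cmod z" by (rule ygf_abs(2)[OF z])
  finally show ?thesis .
qed

lemma pair_mset: "{#c, d#} = {#a, b#} \<Longrightarrow> (c = a \<and> d = b) \<or> (c = b \<and> d = a)"
  by (metis add_eq_conv_ex add_mset_eq_single)

lemma W_lower:
  assumes x: "x \<ge> 0"
  shows "x * (1 + W x N + (W x N)^2 / 2) \<le> W x (2*N+1)"
proof -
  let ?T = "TS N"
  let ?A0 = "{Node {#}}"
  let ?A1 = "(\<lambda>a. Node {#a#}) ` ?T"
  let ?f = "\<lambda>p. Node {#fst p, snd p#}"
  let ?A2 = "?f ` (?T \<times> ?T)"
  have fin: "finite ?T" by (rule finite_TS)
  have sub: "?A0 \<union> ?A1 \<union> ?A2 \<subseteq> TS (2*N+1)"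
    by (auto simp: TS_def)
  have d1: "?A0 \<inter> ?A1 = {}" by auto
  define cs where "cs t = (case t of Node M \<Rightarrow> size M)" for t
  have c2: "cs t = 2" if "t \<in> ?A2" for t using that by (auto simp: cs_def)
  have c01: "cs t \<le> 1" if "t \<in> ?A0 \<union> ?A1" for t using that by (auto simp: cs_def)
  have d2: "(?A0 \<union> ?A1) \<inter> ?A2 = {}"
  proof (rule ccontr)
    assume "(?A0 \<union> ?A1) \<inter> ?A2 \<noteq> {}"
    then obtain t where "t \<in> ?A0 \<union> ?A1" "t \<in> ?A2" by blast
    with c2 c01 show False by fastforce
  qed
  have s0: "(\<Sum>t\<in>?A0. x ^ nverts t) = x" by simp
  have s1: "(\<Sum>t\<in>?A1. x ^ nverts t) = x * W x N"
    by (subst sum.reindex) (auto simp: inj_on_def W_def sum_distrib_left)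
  have s2: "x * (W x N)^2 \<le> 2 * (\<Sum>t\<in>?A2. x ^ nverts t)"
  proof -
    have "x * (W x N)^2 = (\<Sum>p\<in>?T \<times> ?T. x ^ nverts (?f p))"
      unfolding W_def power2_eq_square sum_product sum.cartesian_product
      by (subst sum_distrib_left) (rule sum.cong, auto simp: power_add)
    also have "\<dots> = (\<Sum>y\<in>?A2. \<Sum>p\<in>{p. p \<in> ?T \<times> ?T \<and> ?f p = y}. x ^ nverts (?f p))"
      by (rule sum.image_gen) (use fin in auto)
    also have "\<dots> \<le> (\<Sum>y\<in>?A2. 2 * x ^ nverts y)"
    proof (rule sum_mono)
      fix y assume "y \<in> ?A2"
      then obtain a b where y: "y = Node {#a, b#}" by auto
      have fib: "{p. p \<in> ?T \<times> ?T \<and> ?f p = y} \<subseteq> {(a,b),(b,a)}"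
        using y pair_mset by fastforce
      have "(\<Sum>p\<in>{p. p \<in> ?T \<times> ?T \<and> ?f p = y}. x ^ nverts (?f p))
          = (\<Sum>p\<in>{p. p \<in> ?T \<times> ?T \<and> ?f p = y}. x ^ nverts y)"
        by (rule sum.cong) auto
      also have "\<dots> = real (card {p. p \<in> ?T \<times> ?T \<and> ?f p = y}) * x ^ nverts y" by simp
      also have "\<dots> \<le> 2 * x ^ nverts y"
      proof (rule mult_right_mono)
        define k where "k = card {p. p \<in> ?T \<times> ?T \<and> ?f p = y}"
        have "k \<le> card {(a,b),(b,a)}"
          unfolding k_def by (rule card_mono[OF _ fib]) simp
        also have "\<dots> \<le> 2" by (cases "a = b") simp_all
        finally have "k \<le> 2" .
        then show "real (card {p. p \<in> ?T \<times> ?T \<and> ?f p = y}) \<le> 2" unfolding k_def[symmetric] by simp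
      qed (use x in simp)
      finally show "(\<Sum>p\<in>{p. p \<in> ?T \<times> ?T \<and> ?f p = y}. x ^ nverts (?f p)) \<le> 2 * x ^ nverts y" .
    qed
    also have "\<dots> = 2 * (\<Sum>t\<in>?A2. x ^ nverts t)" by (simp add: sum_distrib_left)
    finally show ?thesis .
  qed
  have "(\<Sum>t\<in>?A0 \<union> ?A1 \<union> ?A2. x ^ nverts t) = x + x * W x N + (\<Sum>t\<in>?A2. x ^ nverts t)"
  proof -
    have e1: "(\<Sum>t\<in>?A0 \<union> ?A1 \<union> ?A2. x ^ nverts t) = (\<Sum>t\<in>?A0 \<union> ?A1. x ^ nverts t) + (\<Sum>t\<in>?A2. x ^ nverts t)"
      by (rule sum.union_disjoint) (use fin d2 in auto)
    have e2: "(\<Sum>t\<in>?A0 \<union> ?A1. x ^ nverts t) = (\<Sum>t\<in>?A0. x ^ nverts t) + (\<Sum>t\<in>?A1. x ^ nverts t)"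
      by (rule sum.union_disjoint) (use fin d1 in auto)
    show ?thesis unfolding e1 e2 s0 s1 ..
  qed
  moreover have "(\<Sum>t\<in>?A0 \<union> ?A1 \<union> ?A2. x ^ nverts t) \<le> W x (2*N+1)"
    unfolding W_def
    by (rule sum_mono2[OF finite_TS sub]) (use x in auto)
  ultimately have "x + x * W x N + (\<Sum>t\<in>?A2. x ^ nverts t) \<le> W x (2*N+1)" by linarith
  moreover have "x * (1 + W x N + (W x N)^2 / 2) = x + x * W x N + (x * (W x N)^2) / 2"
    by (simp add: algebra_simps)
  ultimately show ?thesis using s2 by linarith
qed


lemma W_step:
  "W (5/12) N + 1/120 \<le> W (5/12) (2*N+1)"
proof -
  let ?w = "W (5/12) N"
  have "?w + 1/120 \<le> 5/12 * (1 + ?w + ?w^2 / 2)"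
  proof -
    have "5/12 * (1 + ?w + ?w^2 / 2) - (?w + 1/120) = 5/24 * (?w - 7/5)^2"
      by (simp add: power2_eq_square algebra_simps)
    moreover have "0 \<le> 5/24 * (?w - 7/5)^2" by simp
    ultimately show ?thesis by linarith
  qed
  also have "\<dots> \<le> W (5/12) (2*N+1)" by (rule W_lower) simp
  finally show ?thesis .
qed

lemma W_grow: "real k / 120 \<le> W (5/12) (2^k - 1)"
proof (induction k)
  case 0
  then show ?case by (simp add: W_def TS0)
next
  case (Suc k)
  have e: "2 * (2^k - 1) + 1 = (2::nat)^Suc k - 1"
  proof -
    have "(1::nat) \<le> 2^k" by simp
    then show ?thesis by (simp only: power_Suc)
  qed
  have "real (Suc k) / 120 = real k / 120 + 1/120" by (simp add: field_simps)
  also have "\<dots> \<le> W (5/12) (2^k - 1) + 1/120" using Suc.IH by simp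
  also have "\<dots> \<le> W (5/12) (2 * (2^k - 1) + 1)" by (rule W_step)
  finally show ?case by (simp only: e)
qed

lemma conv_radius_le: "conv_radius (\<lambda>n. (of_nat (ycount n) :: complex)) \<le> ereal (5/12)"
proof (rule ccontr)
  assume "\<not> ?thesis"
  then have "ereal (norm (complex_of_real (5/12))) < conv_radius (\<lambda>n. (of_nat (ycount n) :: complex))"
    by simp
  from abs_summable_in_conv_radius[OF this]
  have s: "summable (\<lambda>n. real (ycount n) * (5/12) ^ n)"
    by (simp add: norm_mult norm_power)
  define Y where "Y = (\<Sum>n. real (ycount n) * (5/12::real) ^ n)"
  have bd: "W (5/12) N \<le> Y" for N
    unfolding W_eq Y_def by (rule sum_le_suminf[OF s]) auto
  obtain k :: nat where k: "120 * Y < real k" using reals_Archimedean2 by blast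
  have "real k / 120 \<le> Y" using W_grow[of k] bd[of "2^k - 1"] by linarith
  with k show False by simp
qed

lemma rho_bounds: "0 \<le> rho" "rho \<le> 5/12"
proof -
  let ?c = "conv_radius (\<lambda>n. (of_nat (ycount n) :: complex))"
  have c0: "0 \<le> ?c" by (rule conv_radius_nonneg)
  have c1: "?c \<le> ereal (5/12)" by (rule conv_radius_le)
  from c0 c1 obtain c where c: "?c = ereal c" "0 \<le> c" "c \<le> 5/12"
    by (cases ?c) auto
  show "0 \<le> rho" "rho \<le> 5/12" unfolding rho_def using c by simp_all
qed



definition tt :: "complex \<Rightarrow> complex \<Rightarrow> real" where
  "tt z v = cmod z * max 1 (cmod v)"

lemma max_pow: "0 \<le> (a::real) \<Longrightarrow> max 1 (a ^ n) = (max 1 a) ^ n"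
proof (cases "a \<le> 1")
  case True
  assume "0 \<le> a"
  then have "a ^ n \<le> 1" using True by (simp add: power_le_one)
  then show ?thesis using True by simp
next
  case False
  then have "1 \<le> a ^ n" by simp
  then show ?thesis using False by simp
qed

lemma tt_pow: "tt (z ^ n) (v ^ n) = (tt z v) ^ n"
  by (simp add: tt_def norm_power max_pow power_mult_distrib)

lemma max_norm_pow: "max 1 (cmod (w ^ n)) = (max 1 (cmod w)) ^ n"
  by (simp only: norm_power max_pow[OF norm_ge_zero])

lemma tt_nonneg: "0 \<le> tt z v"
  by (simp add: tt_def)

lemma cmod_le_tt: "cmod z \<le> tt z v"
  unfolding tt_def by (simp add: mult_left_mono[of 1 "max 1 (cmod v)" "cmod z", simplified])

lemma pow_le_max: "cmod w ^ i * max 1 (cmod w) \<le> (max 1 (cmod w)) ^ Suc i"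
proof -
  have "cmod w ^ i \<le> (max 1 (cmod w)) ^ i" by (intro power_mono) auto
  then show ?thesis by (simp add: mult_right_mono mult.commute)
qed

lemma pow_le_max': "cmod w ^ i \<le> (max 1 (cmod w)) ^ Suc i"
proof -
  have "cmod w ^ i \<le> cmod w ^ i * max 1 (cmod w)"
    by (simp add: mult_left_mono[of 1 "max 1 (cmod w)" "cmod w ^ i", simplified])
  also have "\<dots> \<le> (max 1 (cmod w)) ^ Suc i" by (rule pow_le_max)
  finally show ?thesis .
qed

lemma geo_sums: "0 \<le> t \<Longrightarrow> t < 1 \<Longrightarrow> (\<lambda>i. (t::real) ^ Suc i) sums (t / (1 - t))"
proof -
  assume t: "0 \<le> t" "t < 1"
  have "(\<lambda>i. t ^ i) sums (1 / (1 - t))" by (rule geometric_sums) (use t in simp)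
  from sums_mult[OF this, of t] show ?thesis by simp
qed

fun Gk :: "nat \<Rightarrow> complex \<Rightarrow> complex \<Rightarrow> complex" where
  "Gk 0 z v = ygf z"
| "Gk (Suc k) z v = Yk (Suc k) z v * (\<Sum>i. Gk k (z ^ Suc i) (v ^ Suc i) * v ^ i)"


lemma base_case:
  assumes t: "tt z v < 9/50"
  shows "((\<lambda>w. Yk 0 z w) has_field_derivative Gk 0 z v) (at v)
       \<and> cmod (Yk 0 z v) \<le> 2 * tt z v
       \<and> cmod (Gk 0 z v) * max 1 (cmod v) \<le> 3/2 * (18/41) ^ 0 * tt z v"
proof (intro conjI)
  have z: "cmod z \<le> 9/50" using cmod_le_tt[of z v] t by linarith
  have yb: "cmod (ygf z) \<le> 3/2 * cmod z" by (rule ygf_bound[OF z])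
  show "((\<lambda>w. Yk 0 z w) has_field_derivative Gk 0 z v) (at v)"
    by (auto intro!: derivative_eq_intros)
  have "cmod (Yk 0 z v) = cmod v * cmod (ygf z)" by (simp add: norm_mult)
  also have "\<dots> \<le> max 1 (cmod v) * (3/2 * cmod z)"
    by (rule mult_mono) (use yb in auto)
  also have "\<dots> = 3/2 * tt z v" by (simp add: tt_def)
  also have "\<dots> \<le> 2 * tt z v" using tt_nonneg[of z v] by simp
  finally show "cmod (Yk 0 z v) \<le> 2 * tt z v" .
  have "cmod (Gk 0 z v) * max 1 (cmod v) \<le> (3/2 * cmod z) * max 1 (cmod v)"
    by (rule mult_right_mono) (use yb in auto)
  then show "cmod (Gk 0 z v) * max 1 (cmod v) \<le> 3/2 * (18/41) ^ 0 * tt z v"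
    by (simp add: tt_def)
qed


definition Pk :: "nat \<Rightarrow> complex \<Rightarrow> complex \<Rightarrow> bool" where
  "Pk k z v \<longleftrightarrow> ((\<lambda>w. Yk k z w) has_field_derivative Gk k z v) (at v)
       \<and> cmod (Yk k z v) \<le> 2 * tt z v
       \<and> cmod (Gk k z v) * max 1 (cmod v) \<le> 3/2 * (18/41) ^ k * tt z v"

lemma step_case:
  assumes IH: "\<And>z v. tt z v < 9/50 \<Longrightarrow> Pk k z v"
  assumes tz: "tt z v < 9/50"
  shows "Pk (Suc k) z v"
proof -
  define r where "r = (9/50::real)"
  define t where "t = tt z v"
  have t0: "0 \<le> t" unfolding t_def by (rule tt_nonneg)
  have tr: "t < r" using tz by (simp add: t_def r_def)
  define \<rho> where "\<rho> = (t + r) / 2"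
  define \<delta> where "\<delta> = (r - t) / (2 * (cmod z + 1))"
  have zp: "0 < cmod z + 1" by (smt (verit) norm_ge_zero)
  have \<delta>: "\<delta> > 0" unfolding \<delta>_def using tr zp by (intro divide_pos_pos mult_pos_pos) auto
  have \<rho>: "t < \<rho>" "\<rho> < r" "0 \<le> \<rho>" "\<rho> < 1" using tr t0 by (auto simp: \<rho>_def r_def)
  have inS: "tt z w \<le> \<rho>" if "w \<in> ball v \<delta>" for w
  proof -
    have d: "cmod (w - v) < \<delta>" using that by (simp add: dist_norm norm_minus_commute)
    have "cmod w \<le> cmod v + cmod (w - v)" using norm_triangle_ineq[of v "w - v"] by simp
    then have m: "max 1 (cmod w) \<le> max 1 (cmod v) + \<delta>" using d \<delta> by linarith
    have "tt z w \<le> cmod z * (max 1 (cmod v) + \<delta>)"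
      unfolding tt_def by (rule mult_left_mono[OF m]) simp
    also have "\<dots> = t + cmod z * \<delta>" by (simp add: t_def tt_def algebra_simps)
    also have "cmod z * \<delta> \<le> (r - t) / 2"
    proof -
      have "cmod z * \<delta> = (cmod z / (cmod z + 1)) * ((r - t) / 2)"
        by (simp add: \<delta>_def field_simps)
      also have "\<dots> \<le> 1 * ((r - t) / 2)"
        using tr zp by (intro mult_right_mono) (auto simp: divide_le_eq)
      finally show ?thesis by simp
    qed
    finally show ?thesis by (simp add: \<rho>_def field_simps)
  qed
  define f where "f i w = Yk k (z ^ Suc i) (w ^ Suc i) / of_nat (Suc i)" for i w
  define f' where "f' i w = Gk k (z ^ Suc i) (w ^ Suc i) * w ^ i" for i w
  define B where "B = 3/2 * (18/41::real) ^ k"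
  have B0: "0 \<le> B" by (simp add: B_def)
  have small: "tt (z ^ Suc i) (w ^ Suc i) < 9/50" if "tt z w \<le> \<rho>" for i w
  proof -
    have "tt (z ^ Suc i) (w ^ Suc i) = (tt z w) ^ Suc i" by (rule tt_pow)
    also have "\<dots> \<le> \<rho> ^ Suc i" by (intro power_mono that tt_nonneg)
    also have "\<dots> \<le> \<rho>" using \<rho> by (simp add: power_le_one mult_left_le)
    finally show ?thesis using \<rho> by (simp add: r_def)
  qed
  have Pi: "Pk k (z ^ Suc i) (w ^ Suc i)" if "tt z w \<le> \<rho>" for i w
    by (rule IH[OF small[OF that]])
  have der: "(f i has_field_derivative f' i w) (at w within ball v \<delta>)" if "w \<in> ball v \<delta>" for i w
  proof -
    have d: "((\<lambda>u. Yk k (z ^ Suc i) u) has_field_derivative Gk k (z ^ Suc i) (w ^ Suc i)) (at (w ^ Suc i))"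
      using Pi[OF inS[OF that]] by (simp add: Pk_def)
    have p: "((\<lambda>w. w ^ Suc i) has_field_derivative of_nat (Suc i) * w ^ i) (at w)"
      using DERIV_power[OF DERIV_ident, of "Suc i" w UNIV] by simp
    have "((\<lambda>w. Yk k (z ^ Suc i) (w ^ Suc i)) has_field_derivative
            Gk k (z ^ Suc i) (w ^ Suc i) * (of_nat (Suc i) * w ^ i)) (at w)"
      by (rule DERIV_chain2[OF d p])
    from DERIV_cdivide[OF this, of "of_nat (Suc i)"]
    have "(f i has_field_derivative f' i w) (at w)"
      unfolding f_def[abs_def] f'_def by (simp del: of_nat_Suc)
    then show ?thesis by (rule has_field_derivative_at_within)
  qed
  have bnd: "norm (f' i w) \<le> B * tt z w ^ Suc i" if "tt z w \<le> \<rho>" for i w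
  proof -
    have G: "cmod (Gk k (z ^ Suc i) (w ^ Suc i)) * max 1 (cmod (w ^ Suc i)) \<le> B * tt (z ^ Suc i) (w ^ Suc i)"
      using Pi[OF that] by (simp add: Pk_def B_def)
    have "norm (f' i w) = cmod (Gk k (z ^ Suc i) (w ^ Suc i)) * cmod w ^ i"
      by (simp add: f'_def norm_mult norm_power)
    also have "\<dots> \<le> cmod (Gk k (z ^ Suc i) (w ^ Suc i)) * max 1 (cmod (w ^ Suc i))"
      unfolding max_norm_pow by (intro mult_left_mono pow_le_max') simp
    also have "\<dots> \<le> B * tt z w ^ Suc i" using G by (simp only: tt_pow)
    finally show ?thesis .
  qed
  have bnd': "norm (f' i w) \<le> B * \<rho> ^ Suc i" if "w \<in> ball v \<delta>" for i w
  proof -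
    have "norm (f' i w) \<le> B * tt z w ^ Suc i" by (rule bnd[OF inS[OF that]])
    also have "\<dots> \<le> B * \<rho> ^ Suc i"
      by (intro mult_left_mono power_mono inS[OF that] tt_nonneg B0)
    finally show ?thesis .
  qed
  have sumrho: "summable (\<lambda>i. B * \<rho> ^ Suc i)"
    using geo_sums[of \<rho>] \<rho> by (intro summable_mult) (auto simp: sums_iff)
  have unif: "uniformly_convergent_on (ball v \<delta>) (\<lambda>n w. \<Sum>i<n. f' i w)"
    by (rule Weierstrass_m_test'[OF bnd' sumrho])
  have tsum: "(\<lambda>i. t ^ Suc i) sums (t / (1 - t))" by (rule geo_sums) (use t0 tr in \<open>auto simp: r_def\<close>)
  have fv: "norm (f i v) \<le> 2 * t ^ Suc i" for i
  proof -
    have Y: "cmod (Yk k (z ^ Suc i) (v ^ Suc i)) \<le> 2 * tt (z ^ Suc i) (v ^ Suc i)"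
      using Pi[of v i] \<rho> by (simp add: Pk_def t_def)
    have "norm (f i v) = cmod (Yk k (z ^ Suc i) (v ^ Suc i)) / real (Suc i)"
      by (simp add: f_def norm_divide del: of_nat_Suc)
    also have "\<dots> \<le> cmod (Yk k (z ^ Suc i) (v ^ Suc i))"
    proof -
      have "cmod (Yk k (z ^ Suc i) (v ^ Suc i)) \<le> cmod (Yk k (z ^ Suc i) (v ^ Suc i)) * real (Suc i)"
        by (rule mult_le_cancel_left1[THEN iffD2]) auto
      then show ?thesis by (simp add: divide_le_eq del: of_nat_Suc)
    qed
    also have "\<dots> \<le> 2 * t ^ Suc i" using Y by (simp only: tt_pow t_def)
    finally show ?thesis .
  qed
  have sum2t: "summable (\<lambda>i. 2 * t ^ Suc i)" using tsum by (intro summable_mult) (simp add: sums_iff)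
  have sumnf: "summable (\<lambda>i. norm (f i v))"
    by (rule summable_comparison_test[OF _ sum2t]) (use fv in auto)
  have sumv: "summable (\<lambda>i. f i v)" by (rule summable_norm_cancel[OF sumnf])
  have vin: "v \<in> interior (ball v \<delta>)" using \<delta> by simp
  note ser = has_field_derivative_series'[OF convex_ball der unif centre_in_ball[THEN iffD2, OF \<delta>] sumv vin]
  define S where "S w = (\<Sum>n. f n w)" for w
  define D where "D = (\<Sum>n. f' n v)"
  have dS: "(S has_field_derivative D) (at v)" using ser(2) unfolding S_def[abs_def] D_def .
  have Yeq: "(\<lambda>w. Yk (Suc k) z w) = (\<lambda>w. z * exp (S w))"
    by (simp add: S_def f_def)
  have Geq: "Gk (Suc k) z v = z * exp (S v) * D"
    by (simp add: S_def f_def D_def f'_def)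
  have deriv: "((\<lambda>w. Yk (Suc k) z w) has_field_derivative Gk (Suc k) z v) (at v)"
    unfolding Yeq Geq
    using DERIV_cmult[OF DERIV_chain2[OF DERIV_exp dS], of z] by (simp add: mult.assoc)
  have Sb: "cmod (S v) \<le> 2 * (t / (1 - t))"
  proof -
    have "cmod (S v) \<le> (\<Sum>i. norm (f i v))" unfolding S_def by (rule summable_norm[OF sumnf])
    also have "\<dots> \<le> (\<Sum>i. 2 * t ^ Suc i)" by (rule suminf_le[OF fv sumnf sum2t])
    also have "\<dots> = 2 * (t / (1 - t))" using tsum by (simp add: suminf_mult sums_iff)
    finally show ?thesis .
  qed
  have q: "2 * (t / (1 - t)) \<le> 18/41" using tr t0 by (simp add: r_def field_simps)
  have expb: "cmod (exp (S v)) \<le> 2"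
  proof -
    have "cmod (S v) \<le> 1/2" using Sb q by linarith
    from exp_bound_lemma[OF this] have "cmod (exp (S v)) \<le> 1 + 2 * cmod (S v)" .
    then show ?thesis using Sb q by linarith
  qed
  have Yb: "cmod (Yk (Suc k) z v) \<le> 2 * t"
  proof -
    have "cmod (Yk (Suc k) z v) = cmod z * cmod (exp (S v))"
    proof -
      have "Yk (Suc k) z v = z * exp (S v)" using fun_cong[OF Yeq, of v] by (simp only:)
      then show ?thesis by (simp only: norm_mult)
    qed
    also have "\<dots> \<le> t * 2" by (intro mult_mono expb) (auto simp: t_def cmod_le_tt tt_nonneg)
    finally show ?thesis by simp
  qed
  have fvb: "norm (f' i v) * max 1 (cmod v) \<le> B * t ^ Suc i" for i
  proof -
    have G: "cmod (Gk k (z ^ Suc i) (v ^ Suc i)) * max 1 (cmod (v ^ Suc i)) \<le> B * tt (z ^ Suc i) (v ^ Suc i)"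
      using Pi[of v i] \<rho> by (simp add: Pk_def B_def t_def)
    have "norm (f' i v) * max 1 (cmod v) = cmod (Gk k (z ^ Suc i) (v ^ Suc i)) * (cmod v ^ i * max 1 (cmod v))"
      by (simp add: f'_def norm_mult norm_power mult.assoc)
    also have "\<dots> \<le> cmod (Gk k (z ^ Suc i) (v ^ Suc i)) * max 1 (cmod (v ^ Suc i))"
      unfolding max_norm_pow by (intro mult_left_mono pow_le_max) simp
    also have "\<dots> \<le> B * t ^ Suc i" using G by (simp only: tt_pow t_def)
    finally show ?thesis .
  qed
  have sumBt: "summable (\<lambda>i. B * t ^ Suc i)" using tsum by (intro summable_mult) (simp add: sums_iff)
  have m1: "1 \<le> max 1 (cmod v)" by simp
  have sumnf': "summable (\<lambda>i. norm (f' i v) * max 1 (cmod v))"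
    by (rule summable_comparison_test[OF _ sumBt]) (use fvb in auto)
  have sumnf'': "summable (\<lambda>i. norm (f' i v))"
    using summable_mult[OF sumnf', of "1 / max 1 (cmod v)"] m1 by simp
  have Db: "cmod D * max 1 (cmod v) \<le> B * (t / (1 - t))"
  proof -
    have "cmod D \<le> (\<Sum>i. norm (f' i v))" unfolding D_def by (rule summable_norm[OF sumnf''])
    then have "cmod D * max 1 (cmod v) \<le> (\<Sum>i. norm (f' i v)) * max 1 (cmod v)"
      by (rule mult_right_mono) simp
    also have "\<dots> = (\<Sum>i. norm (f' i v) * max 1 (cmod v))"
      by (rule suminf_mult2[OF sumnf''])
    also have "\<dots> \<le> (\<Sum>i. B * t ^ Suc i)" by (rule suminf_le[OF fvb sumnf' sumBt])
    also have "\<dots> = B * (t / (1 - t))" using tsum by (simp add: suminf_mult sums_iff)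
    finally show ?thesis .
  qed
  have Gb: "cmod (Gk (Suc k) z v) * max 1 (cmod v) \<le> 3/2 * (18/41) ^ Suc k * t"
  proof -
    have "cmod (Gk (Suc k) z v) * max 1 (cmod v) = cmod (Yk (Suc k) z v) * (cmod D * max 1 (cmod v))"
    proof -
      have "Gk (Suc k) z v = Yk (Suc k) z v * D" unfolding D_def f'_def by (simp only: Gk.simps)
      then show ?thesis by (simp only: norm_mult mult.assoc)
    qed
    also have "\<dots> \<le> (2 * t) * (B * (t / (1 - t)))"
      by (rule mult_mono[OF Yb Db]) (use t0 in auto)
    also have "\<dots> = (B * t) * (2 * (t / (1 - t)))" by (simp add: algebra_simps)
    also have "\<dots> \<le> (B * t) * (18/41)"
      by (intro mult_left_mono q) (use B0 t0 in simp)
    also have "\<dots> = 3/2 * (18/41) ^ Suc k * t" by (simp add: B_def)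
    finally show ?thesis .
  qed
  show ?thesis unfolding Pk_def t_def[symmetric] using deriv Yb Gb by blast
qed


lemma all_Pk: "tt z v < 9/50 \<Longrightarrow> Pk k z v"
proof (induction k arbitrary: z v)
  case 0
  then show ?case using base_case[OF 0] by (simp add: Pk_def)
next
  case (Suc k)
  show ?case by (rule step_case[OF Suc.IH Suc.prems])
qed

lemma gamma_bound:
  assumes x: "cmod x \<le> 253/600" and u: "cmod u \<le> 1" and n: "n \<ge> 2"
  shows "cmod (gammak k (x ^ n) (u ^ n)) \<le> 3/2 * (18/41) ^ k * cmod x ^ n"
proof -
  have mx: "max 1 (cmod (u ^ n)) = 1" using u by (simp add: norm_power power_le_one)
  have ttv: "tt (x ^ n) (u ^ n) = cmod x ^ n" unfolding tt_def mx by (simp add: norm_power)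
  have "cmod x ^ n \<le> cmod x ^ 2" using x n by (intro power_decreasing) auto
  also have "\<dots> \<le> (253/600) ^ 2" using x by (intro power_mono) auto
  also have "\<dots> < 9/50" by (simp add: power2_eq_square)
  finally have lt: "tt (x ^ n) (u ^ n) < 9/50" using ttv by simp
  note P = all_Pk[OF lt, of k, unfolded Pk_def]
  have g: "gammak k (x ^ n) (u ^ n) = Gk k (x ^ n) (u ^ n)"
    unfolding gammak_def by (rule DERIV_imp_deriv) (use P in blast)
  have "cmod (gammak k (x ^ n) (u ^ n)) = cmod (Gk k (x ^ n) (u ^ n)) * max 1 (cmod (u ^ n))"
    by (simp add: g mx)
  also have "\<dots> \<le> 3/2 * (18/41) ^ k * cmod x ^ n" using P ttv by simp
  finally show ?thesis .
qed

theorem mainTheorem11: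
  fixes \<theta> \<eta> :: real
  assumes "0 < \<theta>" "\<theta> < pi / 2" "0 < \<eta>"
  shows "\<exists>\<epsilon>0>0. \<forall>\<epsilon>. 0 < \<epsilon> \<and> \<epsilon> < \<epsilon>0 \<longrightarrow>
           (\<exists>L C. 0 < L \<and> L < 1 \<and> (\<exists>K. \<forall>k\<ge>K. \<forall>u\<in>Xi \<eta> k. \<forall>x\<in>Delta \<epsilon> \<theta>.
              summable (\<lambda>i. gammak k (x ^ (i + 2)) (u ^ (i + 2))) \<and>
              cmod (\<Sum>i. gammak k (x ^ (i + 2)) (u ^ (i + 2))) \<le> C * L ^ k))"
proof (rule exI[of _ "1/200"], intro conjI allI impI)
  show "(0::real) < 1/200" by simp
  fix \<epsilon> :: real
  assume e: "0 < \<epsilon> \<and> \<epsilon> < 1/200"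
  show "\<exists>L C. 0 < L \<and> L < 1 \<and> (\<exists>K. \<forall>k\<ge>K. \<forall>u\<in>Xi \<eta> k. \<forall>x\<in>Delta \<epsilon> \<theta>.
              summable (\<lambda>i. gammak k (x ^ (i + 2)) (u ^ (i + 2))) \<and>
              cmod (\<Sum>i. gammak k (x ^ (i + 2)) (u ^ (i + 2))) \<le> C * L ^ k)"
  proof (rule exI[of _ "18/41"], rule exI[of _ "3/2"], intro conjI exI[of _ 0] allI impI ballI)
    fix k :: nat and u x
    assume "k \<ge> 0" and u: "u \<in> Xi \<eta> k" and x: "x \<in> Delta \<epsilon> \<theta>"
    have u1: "cmod u \<le> 1" using u by (simp add: Xi_def)
    have "cmod x \<le> cmod (complex_of_real rho) + cmod (x - complex_of_real rho)"
      using norm_triangle_ineq[of "complex_of_real rho" "x - complex_of_real rho"] by simp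
    moreover have "cmod (x - complex_of_real rho) < \<epsilon>" using x by (simp add: Delta_def)
    moreover have "cmod (complex_of_real rho) \<le> 5/12" using rho_bounds by simp
    ultimately have x1: "cmod x \<le> 253/600" using e by linarith
    define c where "c = 3/2 * (18/41::real) ^ k"
    have c0: "0 \<le> c" by (simp add: c_def)
    have xl: "cmod x < 1" using x1 by simp
    have bd: "norm (gammak k (x ^ (i + 2)) (u ^ (i + 2))) \<le> c * cmod x ^ 2 * cmod x ^ i" for i
      using gamma_bound[OF x1 u1, of "i+2" k] by (simp add: c_def power2_eq_square mult_ac)
    have gs: "(\<lambda>i. c * cmod x ^ 2 * cmod x ^ i) sums (c * cmod x ^ 2 * (1 / (1 - cmod x)))"
      by (rule sums_mult[OF geometric_sums]) (use xl in simp)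
    have sn: "summable (\<lambda>i. norm (gammak k (x ^ (i + 2)) (u ^ (i + 2))))"
      by (rule summable_comparison_test[OF _ gs[THEN sums_summable]]) (use bd in auto)
    show "summable (\<lambda>i. gammak k (x ^ (i + 2)) (u ^ (i + 2)))"
      by (rule summable_norm_cancel[OF sn])
    have "cmod (\<Sum>i. gammak k (x ^ (i + 2)) (u ^ (i + 2))) \<le> (\<Sum>i. norm (gammak k (x ^ (i + 2)) (u ^ (i + 2))))"
      by (rule summable_norm[OF sn])
    also have "\<dots> \<le> (\<Sum>i. c * cmod x ^ 2 * cmod x ^ i)"
      by (rule suminf_le[OF bd sn gs[THEN sums_summable]])
    also have "\<dots> = c * (cmod x ^ 2 / (1 - cmod x))" using gs by (simp add: sums_iff)
    also have "\<dots> \<le> c * 1"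
    proof (rule mult_left_mono[OF _ c0])
      have "cmod x ^ 2 \<le> (253/600) ^ 2" using x1 by (intro power_mono) auto
      moreover have "(253/600::real) ^ 2 \<le> 1 - 253/600" by (simp add: power2_eq_square)
      ultimately have "cmod x ^ 2 \<le> 1 - cmod x" using x1 by linarith
      then show "cmod x ^ 2 / (1 - cmod x) \<le> 1" using xl by (simp add: divide_le_eq)
    qed
    also have "\<dots> = 3/2 * (18/41) ^ k" by (simp add: c_def)
    finally have fin: "cmod (\<Sum>i. gammak k (x ^ (i + 2)) (u ^ (i + 2))) \<le> 3/2 * (18/41) ^ k" .
    then show "cmod (\<Sum>i. gammak k (x ^ (i + 2)) (u ^ (i + 2))) \<le> 3/2 * (18/41) ^ k" .
  qed simp_all
qed

end
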